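(* Let $E\subset\mathbb{R}^2$ be a set of finite perimeter with $|E|=1$ and let $R=[-\frac a2,\frac a2]\times[-\frac b2,\frac b2]$ be the axis-parallel rectangle with barycenter $(0,0)$, horizontal sidelength $a>0$, vertical sidelength $b>0$ and $|R|=ab=1$. Then for every $\eta\in\{\pm e_1,\pm e_2\}$, $$\mathcal{D}(E,R)\ \ge\ \mathcal{D}(E^{\eta},R).$$
   Context: $\{e_1,e_2\}$ is the canonical basis of $\mathbb{R}^2$; $|z|_\infty=\max\{|z_1|,|z_2|\}$. For $F\subset\mathbb{R}^2$, $d_\infty(z,\partial F)=\inf\{|z-\hat z|_\infty:\hat z\in\partial F\}$, and for measurable $E,F$ the dissipation is $\mathcal{D}(E,F)=\int_{E\triangle F}d_\infty(z,\partial F)\,dz$. For $\eta\in\mathcal S^1$, $\eta^\perp\in\mathcal S^1$ is the unit vector orthogonal to $\eta$ with $\{\eta,\eta^\perp\}$ positively oriented, $\mathbf p_\nu$ denotes the orthogonal projection onto the line spanned by $\nu$; the section of $E$ is $E^\eta_z=\{t\in\mathbb{R}:\mathbf p_{\eta^\perp}z+t\eta\in E\}$ and the Steiner symmetrization of $E$ in direction $\eta$ is $E^\eta=\{z\in\mathbb{R}^2:|\mathbf p_\eta z|\le \mathcal L^1(E^\eta_z)/2\}$. *)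

theory Defs
  imports "HOL-Analysis.Analysis"
begin

definition linf :: "real \<times> real \<Rightarrow> real" where
  "linf z = max \<bar>fst z\<bar> \<bar>snd z\<bar>"

definition dist_inf_bd :: "(real \<times> real) set \<Rightarrow> real \<times> real \<Rightarrow> real" where
  "dist_inf_bd F z = Inf {linf (z - w) | w. w \<in> frontier F}"

definition dissipation :: "(real \<times> real) set \<Rightarrow> (real \<times> real) set \<Rightarrow> ennreal" where
  "dissipation E F = (\<integral>\<^sup>+ z \<in> (E - F) \<union> (F - E). ennreal (dist_inf_bd F z) \<partial>lebesgue)"

definition perp :: "real \<times> real \<Rightarrow> real \<times> real" where
  "perp v = (- snd v, fst v)"

definition proj :: "real \<times> real \<Rightarrow> real \<times> real \<Rightarrow> real \<times> real" where
  "proj nu z = (z \<bullet> nu) *\<^sub>R nu"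

definition line_section :: "(real \<times> real) set \<Rightarrow> real \<times> real \<Rightarrow> real \<times> real \<Rightarrow> real set" where
  "line_section E eta z = {t. proj (perp eta) z + t *\<^sub>R eta \<in> E}"

definition steiner :: "(real \<times> real) set \<Rightarrow> real \<times> real \<Rightarrow> (real \<times> real) set" where
  "steiner E eta = {z. ennreal (2 * norm (proj eta z)) \<le> emeasure lebesgue (line_section E eta z)}"

definition admissible_field ::
  "(real \<times> real \<Rightarrow> real \<times> real) \<Rightarrow> (real \<times> real \<Rightarrow> real \<times> real \<Rightarrow> real \<times> real) \<Rightarrow> bool" where
  "admissible_field \<phi> D \<longleftrightarrow>
     (\<forall>x. (\<phi> has_derivative D x) (at x)) \<and>
     (\<forall>v. continuous_on UNIV (\<lambda>x. D x v)) \<and>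
     bounded {x. \<phi> x \<noteq> 0} \<and>
     (\<forall>x. norm (\<phi> x) \<le> 1)"

definition divergence :: "(real \<times> real \<Rightarrow> real \<times> real \<Rightarrow> real \<times> real) \<Rightarrow> real \<times> real \<Rightarrow> real" where
  "divergence D x = fst (D x (1, 0)) + snd (D x (0, 1))"

definition perimeter :: "(real \<times> real) set \<Rightarrow> ereal" where
  "perimeter E = (SUP (\<phi>, D) \<in> {(\<phi>, D). admissible_field \<phi> D}.
                    ereal (integral\<^sup>L lebesgue (\<lambda>x. indicator E x * divergence D x)))"

definition finite_perimeter :: "(real \<times> real) set \<Rightarrow> bool" where
  "finite_perimeter E \<longleftrightarrow> E \<in> sets lebesgue \<and> perimeter E < \<infinity>"

end

theory Submission
  imports Defs
begin



lemma frontier_rect: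
  fixes al be :: real assumes "al > 0" "be > 0"
  shows "frontier ({-al..al} \<times> {-be..be}) =
     {w. \<bar>fst w\<bar> \<le> al \<and> \<bar>snd w\<bar> \<le> be \<and> (\<bar>fst w\<bar> = al \<or> \<bar>snd w\<bar> = be)}"
proof -
  have "closure ({-al..al} \<times> {-be..be}) = {-al..al} \<times> {-be..be}"
    by (simp add: closure_Times)
  moreover have "interior ({-al..al} \<times> {-be..be}) = {-al<..<al} \<times> {-be<..<be}"
    by (simp add: interior_Times)
  ultimately have "frontier ({-al..al} \<times> {-be..be}) = {-al..al} \<times> {-be..be} - {-al<..<al} \<times> {-be<..<be}"
    unfolding frontier_def by simp
  also have "\<dots> = {w. \<bar>fst w\<bar> \<le> al \<and> \<bar>snd w\<bar> \<le> be \<and> (\<bar>fst w\<bar> = al \<or> \<bar>snd w\<bar> = be)}"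
    by (auto simp: abs_le_iff)
  finally show ?thesis .
qed

lemma lower_aux:
  fixes x y u v al be :: real
  assumes "\<bar>u\<bar> \<le> al" "\<bar>v\<bar> \<le> be" "\<bar>u\<bar> = al \<or> \<bar>v\<bar> = be"
  shows "\<bar>max (\<bar>x\<bar> - al) (\<bar>y\<bar> - be)\<bar> \<le> max \<bar>x - u\<bar> \<bar>y - v\<bar>"
  using assms by (smt (verit, best))

lemma dist_rect:
  fixes a b :: real assumes "a > 0" "b > 0"
  shows "dist_inf_bd ({-a/2..a/2} \<times> {-b/2..b/2}) z = \<bar>max (\<bar>fst z\<bar> - a/2) (\<bar>snd z\<bar> - b/2)\<bar>"
proof -
  define al where "al = a/2"
  define be where "be = b/2"
  have al: "al > 0" and be: "be > 0" using assms by (auto simp: al_def be_def)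
  have "{-a/2..a/2} \<times> {-b/2..b/2} = {-al..al} \<times> {-be..be}" by (simp add: al_def be_def)
  then have fr: "frontier ({-a/2..a/2} \<times> {-b/2..b/2}) =
     {w. \<bar>fst w\<bar> \<le> al \<and> \<bar>snd w\<bar> \<le> be \<and> (\<bar>fst w\<bar> = al \<or> \<bar>snd w\<bar> = be)}"
    using frontier_rect[OF al be] by simp
  obtain x y where z: "z = (x, y)" by (cases z)
  define D where "D = \<bar>max (\<bar>x\<bar> - al) (\<bar>y\<bar> - be)\<bar>"
  have lower: "D \<le> linf (z - w)" if "\<bar>fst w\<bar> \<le> al" "\<bar>snd w\<bar> \<le> be" "\<bar>fst w\<bar> = al \<or> \<bar>snd w\<bar> = be" for w
  proof -
    obtain u v where w: "w = (u, v)" by (cases w)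
    have l: "linf (z - w) = max \<bar>x - u\<bar> \<bar>y - v\<bar>" by (simp add: linf_def z w)
    show ?thesis unfolding l D_def using that lower_aux[of u al v be x y] by (simp add: w)
  qed
  define sx where "sx = (if x \<ge> 0 then al else - al)"
  define sy where "sy = (if y \<ge> 0 then be else - be)"
  define cx where "cx = max (-al) (min al x)"
  define cy where "cy = max (-be) (min be y)"
  have attain: "\<exists>w. \<bar>fst w\<bar> \<le> al \<and> \<bar>snd w\<bar> \<le> be \<and> (\<bar>fst w\<bar> = al \<or> \<bar>snd w\<bar> = be) \<and> linf (z - w) = D"
  proof (cases "\<bar>x\<bar> - al \<ge> \<bar>y\<bar> - be")
    case True
    have "\<bar>sx\<bar> \<le> al \<and> \<bar>cy\<bar> \<le> be \<and> (\<bar>sx\<bar> = al \<or> \<bar>cy\<bar> = be) \<and> max \<bar>x - sx\<bar> \<bar>y - cy\<bar> = D"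
      using True al be unfolding D_def sx_def cy_def by (smt (verit, best))
    then show ?thesis
      by (intro exI[of _ "(sx, cy)"]) (simp add: linf_def z)
  next
    case False
    have "\<bar>cx\<bar> \<le> al \<and> \<bar>sy\<bar> \<le> be \<and> (\<bar>cx\<bar> = al \<or> \<bar>sy\<bar> = be) \<and> max \<bar>x - cx\<bar> \<bar>y - sy\<bar> = D"
      using False al be unfolding D_def sy_def cx_def by (smt (verit, best))
    then show ?thesis
      by (intro exI[of _ "(cx, sy)"]) (simp add: linf_def z)
  qed
  then obtain w0 where w0: "\<bar>fst w0\<bar> \<le> al" "\<bar>snd w0\<bar> \<le> be" "\<bar>fst w0\<bar> = al \<or> \<bar>snd w0\<bar> = be" "linf (z - w0) = D"
    by blast
  have "Inf {linf (z - w) | w. w \<in> frontier ({-a/2..a/2} \<times> {-b/2..b/2})} = D"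
    apply (rule cInf_eq_minimum)
    using w0 lower unfolding fr by force+
  then show ?thesis unfolding dist_inf_bd_def D_def z al_def be_def by simp
qed



lemma pw_bool:
  fixes G lam :: real and a i r :: bool
  assumes "i \<Longrightarrow> G \<le> lam" "\<not> i \<Longrightarrow> lam \<le> G" "r \<longleftrightarrow> G \<le> 0"
  shows "\<bar>G\<bar> * (if (i \<and> \<not> r) \<or> (r \<and> \<not> i) then 1 else 0) + (max lam 0 * (if a then 1 else 0) + max (- lam) 0 * (if i then 1 else 0))
       \<le> \<bar>G\<bar> * (if (a \<and> \<not> r) \<or> (r \<and> \<not> a) then 1 else 0) + (max lam 0 * (if i then 1 else 0) + max (- lam) 0 * (if a then 1 else 0))"
  using assms by (cases a; cases i; cases r) (simp_all add: abs_if max_def)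

lemma pw_real:
  fixes G lam :: real
  assumes "t \<in> I \<Longrightarrow> G \<le> lam" "t \<notin> I \<Longrightarrow> lam \<le> G" "t \<in> R1 \<longleftrightarrow> G \<le> 0"
  shows "\<bar>G\<bar> * indicator ((I - R1) \<union> (R1 - I)) t + (max lam 0 * indicator A t + max (- lam) 0 * indicator I t)
       \<le> \<bar>G\<bar> * indicator ((A - R1) \<union> (R1 - A)) t + (max lam 0 * indicator I t + max (- lam) 0 * indicator A t)"
proof -
  have e: "indicator S t = (if t \<in> S then 1 else (0::real))" for S by (simp add: indicator_def)
  have m: "t \<in> (X - Y) \<union> (Y - X) \<longleftrightarrow> (t \<in> X \<and> \<not> t \<in> Y) \<or> (t \<in> Y \<and> \<not> t \<in> X)" for X Y by blast
  show ?thesis unfolding e m using pw_bool[of "t \<in> I" G lam "t \<in> R1" "t \<in> A"] assms by blast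
qed
lemma int_helper:
  fixes F :: "real \<Rightarrow> ennreal"
  assumes [measurable]: "F \<in> borel_measurable borel" "A \<in> sets borel" "I \<in> sets borel"
  shows "(\<integral>\<^sup>+t. F t + (ennreal p * indicator A t + ennreal q * indicator I t) \<partial>lborel)
       = (\<integral>\<^sup>+t. F t \<partial>lborel) + (ennreal p * emeasure lborel A + ennreal q * emeasure lborel I)"
proof -
  have "(\<integral>\<^sup>+t. F t + (ennreal p * indicator A t + ennreal q * indicator I t) \<partial>lborel)
       = (\<integral>\<^sup>+t. F t \<partial>lborel) + (\<integral>\<^sup>+t. ennreal p * indicator A t + ennreal q * indicator I t \<partial>lborel)"
    by (rule nn_integral_add) auto
  also have "(\<integral>\<^sup>+t. ennreal p * indicator A t + ennreal q * indicator I t \<partial>lborel)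
     = (\<integral>\<^sup>+t. ennreal p * indicator A t \<partial>lborel) + (\<integral>\<^sup>+t. ennreal q * indicator I t \<partial>lborel)"
    by (rule nn_integral_add) auto
  also have "(\<integral>\<^sup>+t. ennreal p * indicator A t \<partial>lborel) = ennreal p * emeasure lborel A"
    by (rule nn_integral_cmult_indicator) simp
  also have "(\<integral>\<^sup>+t. ennreal q * indicator I t \<partial>lborel) = ennreal q * emeasure lborel I"
    by (rule nn_integral_cmult_indicator) simp
  finally show ?thesis .
qed

lemma eind: "(x::real) \<ge> 0 \<Longrightarrow> ennreal x * indicator S t = ennreal (x * indicator S t)"
  by (auto simp: indicator_def)

lemma core1d:
  fixes A :: "real set" and c k :: real
  assumes A[measurable]: "A \<in> sets borel"
  shows "(\<integral>\<^sup>+t. ennreal \<bar>max (\<bar>t\<bar> - c) k\<bar> * indicator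
            (({t. ennreal (2*\<bar>t\<bar>) \<le> emeasure lborel A} - {t. max (\<bar>t\<bar> - c) k \<le> 0})
           \<union> ({t. max (\<bar>t\<bar> - c) k \<le> 0} - {t. ennreal (2*\<bar>t\<bar>) \<le> emeasure lborel A})) t \<partial>lborel)
       \<le> (\<integral>\<^sup>+t. ennreal \<bar>max (\<bar>t\<bar> - c) k\<bar> * indicator
            ((A - {t. max (\<bar>t\<bar> - c) k \<le> 0}) \<union> ({t. max (\<bar>t\<bar> - c) k \<le> 0} - A)) t \<partial>lborel)"
  (is "?L \<le> ?R")
proof -
  define g where "g t = max (\<bar>t\<bar> - c) k" for t
  define R1 where "R1 = {t. g t \<le> 0}"
  have R1m[measurable]: "R1 \<in> sets borel" unfolding R1_def g_def by measurable
  have gm[measurable]: "g \<in> borel_measurable borel" unfolding g_def by measurable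
  have eqR1: "{t. max (\<bar>t\<bar> - c) k \<le> 0} = R1" unfolding R1_def g_def ..
  define m where "m = emeasure lborel A"
  show ?thesis
  proof (cases "m = \<infinity>")
    case True
    define c' where "c' = \<bar>c\<bar> + \<bar>k\<bar> + 1"
    define B where "B = {-c'..c'}"
    have Bm[measurable]: "B \<in> sets borel" unfolding B_def by simp
    have "emeasure lborel B = ennreal (2*c')" unfolding B_def by (simp add: c'_def)
    then have Bfin: "emeasure lborel B < \<infinity>" by simp
    have "emeasure lborel A \<le> emeasure lborel ((A - B) \<union> B)"
      by (intro emeasure_mono) auto
    also have "\<dots> \<le> emeasure lborel (A - B) + emeasure lborel B"
      by (intro emeasure_subadditive) auto
    finally have "emeasure lborel (A - B) + emeasure lborel B = \<infinity>"
      using True unfolding m_def by (simp add: top_unique)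
    then have "emeasure lborel (A - B) = \<infinity> \<or> emeasure lborel B = \<infinity>"
      by (simp only: infinity_ennreal_def ennreal_add_eq_top)
    moreover have "emeasure lborel B \<noteq> \<infinity>" using Bfin by (rule less_imp_neq)
    ultimately have "emeasure lborel (A - B) = \<infinity>" by blast
    moreover have "emeasure lborel (A - B) = (\<integral>\<^sup>+t. indicator (A - B) t \<partial>lborel)"
      by simp
    moreover have "(\<integral>\<^sup>+t. indicator (A - B) t \<partial>lborel) \<le> ?R"
    proof (intro nn_integral_mono)
      fix t
      show "indicator (A - B) t \<le> ennreal \<bar>max (\<bar>t\<bar> - c) k\<bar> * indicator
            ((A - {t. max (\<bar>t\<bar> - c) k \<le> 0}) \<union> ({t. max (\<bar>t\<bar> - c) k \<le> 0} - A)) t"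
      proof (cases "t \<in> A - B")
        case True
        then have "\<bar>t\<bar> > c'" unfolding B_def by auto
        then have "max (\<bar>t\<bar> - c) k \<ge> 1" unfolding c'_def by auto
        then have "t \<in> (A - {t. max (\<bar>t\<bar> - c) k \<le> 0}) \<union> ({t. max (\<bar>t\<bar> - c) k \<le> 0} - A)"
          using True by auto
        moreover have "ennreal 1 \<le> ennreal \<bar>max (\<bar>t\<bar> - c) k\<bar>"
          using \<open>max (\<bar>t\<bar> - c) k \<ge> 1\<close> by (intro ennreal_leI) simp
        ultimately show ?thesis using True by simp
      next
        case False
        then show ?thesis by simp
      qed
    qed
    ultimately have "\<infinity> \<le> ?R" by metis
    then have "?R = top" by (simp only: infinity_ennreal_def top_unique)
    then show ?thesis by (simp only: top_greatest)
  next
    case False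
    then obtain r0 where r0: "m = ennreal r0" "r0 \<ge> 0" by (cases m) auto
    define r where "r = r0 / 2"
    define I where "I = {-r..r}"
    have eqI: "{t. ennreal (2*\<bar>t\<bar>) \<le> emeasure lborel A} = I"
    proof -
      have "emeasure lborel A = ennreal r0" using r0 m_def by simp
      then show ?thesis unfolding I_def r_def using r0(2) by (auto simp: ennreal_le_iff)
    qed
    have Im[measurable]: "I \<in> sets borel" unfolding I_def by simp
    have mI: "emeasure lborel I = m" unfolding I_def r_def using r0 by simp
    define lam where "lam = g r"
    define lp where "lp = max lam 0"
    define ln where "ln = max (- lam) 0"
    have inI: "g t \<le> lam" if "t \<in> I" for t
      using that unfolding I_def lam_def g_def r_def by auto
    have notI: "g t \<ge> lam" if "t \<notin> I" for t
      using that r0 unfolding I_def lam_def g_def r_def by auto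
    have pw: "ennreal \<bar>g t\<bar> * indicator ((I - R1) \<union> (R1 - I)) t + (ennreal lp * indicator A t + ennreal ln * indicator I t)
       \<le> ennreal \<bar>g t\<bar> * indicator ((A - R1) \<union> (R1 - A)) t + (ennreal lp * indicator I t + ennreal ln * indicator A t)" for t
    proof -
      have real: "\<bar>g t\<bar> * indicator ((I - R1) \<union> (R1 - I)) t + (lp * indicator A t + ln * indicator I t)
       \<le> \<bar>g t\<bar> * indicator ((A - R1) \<union> (R1 - A)) t + (lp * indicator I t + ln * indicator A t)"
        unfolding lp_def ln_def
        by (rule pw_real) (use inI notI in \<open>auto simp: R1_def\<close>)
      have nn: "lp \<ge> 0" "ln \<ge> 0" unfolding lp_def ln_def by auto
      have "ennreal (\<bar>g t\<bar> * indicator ((I - R1) \<union> (R1 - I)) t + (lp * indicator A t + ln * indicator I t))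
       \<le> ennreal (\<bar>g t\<bar> * indicator ((A - R1) \<union> (R1 - A)) t + (lp * indicator I t + ln * indicator A t))"
        using ennreal_leI[OF real] .
      then show ?thesis
        unfolding eind[OF abs_ge_zero] eind[OF nn(1)] eind[OF nn(2)]
        by (simp add: ennreal_plus[symmetric] nn del: ennreal_plus)
    qed
    have "?L + (ennreal lp * m + ennreal ln * m)
        = (\<integral>\<^sup>+t. ennreal \<bar>g t\<bar> * indicator ((I - R1) \<union> (R1 - I)) t + (ennreal lp * indicator A t + ennreal ln * indicator I t) \<partial>lborel)"
      unfolding eqI eqR1 g_def[symmetric] R1_def[symmetric]
      by (subst int_helper) (auto simp: mI m_def)
    also have "\<dots> \<le> (\<integral>\<^sup>+t. ennreal \<bar>g t\<bar> * indicator ((A - R1) \<union> (R1 - A)) t + (ennreal lp * indicator I t + ennreal ln * indicator A t) \<partial>lborel)"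
      by (intro nn_integral_mono pw)
    also have "\<dots> = ?R + (ennreal lp * m + ennreal ln * m)"
      unfolding eqI eqR1 g_def[symmetric] R1_def[symmetric]
      by (subst int_helper) (auto simp: mI m_def)
    finally have "(ennreal lp * m + ennreal ln * m) + ?L \<le> (ennreal lp * m + ennreal ln * m) + ?R"
      by (simp add: add.commute)
    moreover have "ennreal lp * m + ennreal ln * m \<noteq> \<infinity>"
      using r0 by (simp add: ennreal_add_eq_top ennreal_mult_eq_top_iff)
    ultimately show ?thesis by (simp add: ennreal_add_left_cancel_le)
  qed
qed



definition St1 :: "(real \<times> real) set \<Rightarrow> (real \<times> real) set" where
  "St1 S = {z. ennreal (2*\<bar>fst z\<bar>) \<le> emeasure lborel {t. (t, snd z) \<in> S}}"
definition St2 :: "(real \<times> real) set \<Rightarrow> (real \<times> real) set" where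
  "St2 S = {z. ennreal (2*\<bar>snd z\<bar>) \<le> emeasure lborel {t. (fst z, t) \<in> S}}"
definition rect :: "real \<Rightarrow> real \<Rightarrow> (real \<times> real) set" where
  "rect a b = {-a/2..a/2} \<times> {-b/2..b/2}"
definition dd :: "real \<Rightarrow> real \<Rightarrow> real \<times> real \<Rightarrow> real" where
  "dd a b z = \<bar>max (\<bar>fst z\<bar> - a/2) (\<bar>snd z\<bar> - b/2)\<bar>"

lemma meas_sec2:
  fixes S :: "(real \<times> real) set" assumes "S \<in> sets borel"
  shows "(\<lambda>x. emeasure lborel {t. (x,t) \<in> S}) \<in> borel_measurable borel"
proof -
  have "S \<in> sets (lborel \<Otimes>\<^sub>M lborel)" using assms by (subst lborel_prod) simp
  from lborel.measurable_emeasure_Pair[OF this] show ?thesis by (simp add: vimage_def)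
qed

lemma meas_sec1:
  fixes S :: "(real \<times> real) set" assumes "S \<in> sets borel"
  shows "(\<lambda>y. emeasure lborel {t. (t,y) \<in> S}) \<in> borel_measurable borel"
proof -
  have c: "(\<lambda>z::real\<times>real. (snd z, fst z)) \<in> borel_measurable borel"
    by (intro borel_measurable_continuous_onI continuous_intros)
  have "(\<lambda>z::real\<times>real. (snd z, fst z)) -` S \<inter> space borel \<in> sets borel"
    by (rule measurable_sets[OF c assms])
  then have T: "{z. (snd z, fst z) \<in> S} \<in> sets borel" by (simp add: vimage_def)
  have eq: "{t. (y, t) \<in> {z. (snd z, fst z) \<in> S}} = {t. (t,y) \<in> S}" for y by simp
  show ?thesis using meas_sec2[OF T] unfolding eq .
qed

lemma fst_bm[measurable]: "(fst :: real \<times> real \<Rightarrow> real) \<in> borel_measurable borel"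
  by (intro borel_measurable_continuous_onI continuous_intros)
lemma snd_bm[measurable]: "(snd :: real \<times> real \<Rightarrow> real) \<in> borel_measurable borel"
  by (intro borel_measurable_continuous_onI continuous_intros)

lemma St1_meas: "S \<in> sets borel \<Longrightarrow> St1 S \<in> sets borel"
proof -
  assume S: "S \<in> sets borel"
  define h where "h = (\<lambda>y. emeasure lborel {t. (t,y) \<in> S})"
  have [measurable]: "h \<in> borel_measurable borel" unfolding h_def by (rule meas_sec1[OF S])
  have "Measurable.pred borel (\<lambda>z::real\<times>real. ennreal (2*\<bar>fst z\<bar>) \<le> h (snd z))" by measurable
  moreover have "St1 S = {z. ennreal (2*\<bar>fst z\<bar>) \<le> h (snd z)}" unfolding h_def St1_def by simp
  ultimately show ?thesis unfolding pred_def by simp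
qed

lemma St2_meas: "S \<in> sets borel \<Longrightarrow> St2 S \<in> sets borel"
proof -
  assume S: "S \<in> sets borel"
  define h where "h = (\<lambda>y. emeasure lborel {t. (y,t) \<in> S})"
  have [measurable]: "h \<in> borel_measurable borel" unfolding h_def by (rule meas_sec2[OF S])
  have "Measurable.pred borel (\<lambda>z::real\<times>real. ennreal (2*\<bar>snd z\<bar>) \<le> h (fst z))" by measurable
  moreover have "St2 S = {z. ennreal (2*\<bar>snd z\<bar>) \<le> h (fst z)}" unfolding h_def St2_def by simp
  ultimately show ?thesis unfolding pred_def by simp
qed

lemma rect_meas: "rect a b \<in> sets borel"
  unfolding rect_def by (intro borel_closed closed_Times) auto

lemma ind_sym: "(p \<in> X \<longleftrightarrow> q \<in> X') \<Longrightarrow> (p \<in> Y \<longleftrightarrow> q \<in> Y') \<Longrightarrow>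
   indicator ((X - Y) \<union> (Y - X)) p = (indicator ((X' - Y') \<union> (Y' - X')) q :: ennreal)"
  unfolding indicator_def by auto

lemma rect_mem: "(x, y) \<in> rect a b \<longleftrightarrow> max (\<bar>x\<bar> - a/2) (\<bar>y\<bar> - b/2) \<le> 0"
  unfolding rect_def by (auto simp: abs_le_iff)


lemma tonelli_snd:
  fixes f :: "real \<times> real \<Rightarrow> ennreal"
  assumes "f \<in> borel_measurable borel"
  shows "(\<integral>\<^sup>+z. f z \<partial>lborel) = (\<integral>\<^sup>+y. \<integral>\<^sup>+x. f (x,y) \<partial>lborel \<partial>lborel)"
proof -
  have "f \<in> borel_measurable (lborel \<Otimes>\<^sub>M lborel)" using assms by (subst lborel_prod) simp
  from lborel_pair.nn_integral_snd[OF this] show ?thesis by (simp only: lborel_prod)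
qed

lemma tonelli_fst:
  fixes f :: "real \<times> real \<Rightarrow> ennreal"
  assumes "f \<in> borel_measurable borel"
  shows "(\<integral>\<^sup>+z. f z \<partial>lborel) = (\<integral>\<^sup>+x. \<integral>\<^sup>+y. f (x,y) \<partial>lborel \<partial>lborel)"
proof -
  have "f \<in> borel_measurable (lborel \<Otimes>\<^sub>M lborel)" using assms by (subst lborel_prod) simp
  from lborel.nn_integral_fst[OF this] show ?thesis by (simp only: lborel_prod)
qed

lemma slice1_meas: "(S :: (real \<times> real) set) \<in> sets borel \<Longrightarrow> {t. (t, y) \<in> S} \<in> sets borel"
proof -
  assume S: "S \<in> sets borel"
  have c: "(\<lambda>t::real. (t, y)) \<in> borel_measurable borel"
    by (intro borel_measurable_continuous_onI continuous_intros)
  show ?thesis using measurable_sets[OF c S] by (simp add: vimage_def)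
qed

lemma slice2_meas: "(S :: (real \<times> real) set) \<in> sets borel \<Longrightarrow> {t. (x, t) \<in> S} \<in> sets borel"
proof -
  assume S: "S \<in> sets borel"
  have c: "(\<lambda>t::real. (x, t)) \<in> borel_measurable borel"
    by (intro borel_measurable_continuous_onI continuous_intros)
  show ?thesis using measurable_sets[OF c S] by (simp add: vimage_def)
qed

lemma dd_meas[measurable]: "dd a b \<in> borel_measurable borel"
  unfolding dd_def by measurable

lemma borel1:
  fixes S :: "(real \<times> real) set" assumes S: "S \<in> sets borel"
  shows "(\<integral>\<^sup>+z. ennreal (dd a b z) * indicator ((St1 S - rect a b) \<union> (rect a b - St1 S)) z \<partial>lborel)
       \<le> (\<integral>\<^sup>+z. ennreal (dd a b z) * indicator ((S - rect a b) \<union> (rect a b - S)) z \<partial>lborel)"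
proof -
  have [measurable]: "S \<in> sets borel" "St1 S \<in> sets borel" "rect a b \<in> sets borel"
    using S St1_meas[OF S] rect_meas by auto
  have inner: "(\<integral>\<^sup>+x. ennreal (dd a b (x,y)) * indicator ((St1 S - rect a b) \<union> (rect a b - St1 S)) (x,y) \<partial>lborel)
       \<le> (\<integral>\<^sup>+x. ennreal (dd a b (x,y)) * indicator ((S - rect a b) \<union> (rect a b - S)) (x,y) \<partial>lborel)" for y
  proof -
    define A where "A = {t. (t, y) \<in> S}"
    define k where "k = \<bar>y\<bar> - b/2"
    have Am: "A \<in> sets borel" unfolding A_def by (rule slice1_meas[OF S])
    have e1: "ennreal (dd a b (x,y)) * indicator ((St1 S - rect a b) \<union> (rect a b - St1 S)) (x,y)
       = ennreal \<bar>max (\<bar>x\<bar> - a/2) k\<bar> * indicator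
            (({t. ennreal (2*\<bar>t\<bar>) \<le> emeasure lborel A} - {t. max (\<bar>t\<bar> - a/2) k \<le> 0})
           \<union> ({t. max (\<bar>t\<bar> - a/2) k \<le> 0} - {t. ennreal (2*\<bar>t\<bar>) \<le> emeasure lborel A})) x" for x
      unfolding dd_def k_def
      by (intro arg_cong2[where f="(*)"] refl ind_sym) (auto simp: St1_def A_def rect_mem)
    have e2: "ennreal (dd a b (x,y)) * indicator ((S - rect a b) \<union> (rect a b - S)) (x,y)
       = ennreal \<bar>max (\<bar>x\<bar> - a/2) k\<bar> * indicator
            ((A - {t. max (\<bar>t\<bar> - a/2) k \<le> 0}) \<union> ({t. max (\<bar>t\<bar> - a/2) k \<le> 0} - A)) x" for x
      unfolding dd_def k_def
      by (intro arg_cong2[where f="(*)"] refl ind_sym) (auto simp: A_def rect_mem)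
    show ?thesis unfolding e1 e2 by (rule core1d[OF Am])
  qed
  show ?thesis
    by (subst (1 2) tonelli_snd) (measurable, intro nn_integral_mono inner)
qed


lemma borel2:
  fixes S :: "(real \<times> real) set" assumes S: "S \<in> sets borel"
  shows "(\<integral>\<^sup>+z. ennreal (dd a b z) * indicator ((St2 S - rect a b) \<union> (rect a b - St2 S)) z \<partial>lborel)
       \<le> (\<integral>\<^sup>+z. ennreal (dd a b z) * indicator ((S - rect a b) \<union> (rect a b - S)) z \<partial>lborel)"
proof -
  have [measurable]: "S \<in> sets borel" "St2 S \<in> sets borel" "rect a b \<in> sets borel"
    using S St2_meas[OF S] rect_meas by auto
  have inner: "(\<integral>\<^sup>+y. ennreal (dd a b (x,y)) * indicator ((St2 S - rect a b) \<union> (rect a b - St2 S)) (x,y) \<partial>lborel)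
       \<le> (\<integral>\<^sup>+y. ennreal (dd a b (x,y)) * indicator ((S - rect a b) \<union> (rect a b - S)) (x,y) \<partial>lborel)" for x
  proof -
    define A where "A = {t. (x, t) \<in> S}"
    define k where "k = \<bar>x\<bar> - a/2"
    have Am: "A \<in> sets borel" unfolding A_def by (rule slice2_meas[OF S])
    have e1: "ennreal (dd a b (x,y)) * indicator ((St2 S - rect a b) \<union> (rect a b - St2 S)) (x,y)
       = ennreal \<bar>max (\<bar>y\<bar> - b/2) k\<bar> * indicator
            (({t. ennreal (2*\<bar>t\<bar>) \<le> emeasure lborel A} - {t. max (\<bar>t\<bar> - b/2) k \<le> 0})
           \<union> ({t. max (\<bar>t\<bar> - b/2) k \<le> 0} - {t. ennreal (2*\<bar>t\<bar>) \<le> emeasure lborel A})) y" for y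
      unfolding dd_def k_def max.commute[of "\<bar>x\<bar> - a/2"]
      by (intro arg_cong2[where f="(*)"] refl ind_sym) (auto simp: St2_def A_def rect_mem max.commute)
    have e2: "ennreal (dd a b (x,y)) * indicator ((S - rect a b) \<union> (rect a b - S)) (x,y)
       = ennreal \<bar>max (\<bar>y\<bar> - b/2) k\<bar> * indicator
            ((A - {t. max (\<bar>t\<bar> - b/2) k \<le> 0}) \<union> ({t. max (\<bar>t\<bar> - b/2) k \<le> 0} - A)) y" for y
      unfolding dd_def k_def max.commute[of "\<bar>x\<bar> - a/2"]
      by (intro arg_cong2[where f="(*)"] refl ind_sym) (auto simp: A_def rect_mem max.commute)
    show ?thesis unfolding e1 e2 by (rule core1d[OF Am])
  qed
  show ?thesis
    by (subst (1 2) tonelli_fst) (measurable, intro nn_integral_mono inner)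
qed


lemma compl_meas:
  fixes S N N' :: "real set"
  assumes "S \<in> sets borel" "N \<subseteq> N'" "N' \<in> sets borel" "emeasure lborel N' = 0"
  shows "emeasure lebesgue (S \<union> N) = emeasure lborel S"
proof -
  have "N' \<in> null_sets lborel" using assms by (intro null_setsI) auto
  then have N: "N \<in> null_sets lebesgue" using assms(2) null_sets_completion_iff2 by blast
  have S: "S \<in> sets lebesgue" using assms(1) by simp
  have "emeasure lebesgue (S \<union> N) = emeasure lebesgue S"
    by (rule emeasure_Un_null_set[OF S N])
  also have "\<dots> = emeasure lborel S" using assms(1) by simp
  finally show ?thesis .
qed

lemma AE_sec1:
  fixes N' :: "(real \<times> real) set"
  assumes "N' \<in> null_sets lborel"
  shows "AE y in lborel. emeasure lborel {t. (t, y) \<in> N'} = 0"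
proof -
  have N'b: "N' \<in> sets borel" using assms by auto
  have "N' \<in> sets (lborel \<Otimes>\<^sub>M lborel)" using N'b by (subst lborel_prod) simp
  from lborel_pair.emeasure_pair_measure_alt2[OF this]
  have "(\<integral>\<^sup>+y. emeasure lborel {t. (t, y) \<in> N'} \<partial>lborel) = emeasure lborel N'"
    by (simp add: lborel_prod vimage_def)
  also have "\<dots> = 0" using assms by auto
  finally show ?thesis
    using nn_integral_0_iff_AE[of "\<lambda>y. emeasure lborel {t. (t, y) \<in> N'}" lborel] meas_sec1[OF N'b] by simp
qed

lemma AE_sec2:
  fixes N' :: "(real \<times> real) set"
  assumes "N' \<in> null_sets lborel"
  shows "AE x in lborel. emeasure lborel {t. (x, t) \<in> N'} = 0"
proof -
  have N'b: "N' \<in> sets borel" using assms by auto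
  have "N' \<in> sets (lborel \<Otimes>\<^sub>M lborel)" using N'b by (subst lborel_prod) simp
  from lborel.emeasure_pair_measure_alt[OF this]
  have "(\<integral>\<^sup>+x. emeasure lborel {t. (x, t) \<in> N'} \<partial>lborel) = emeasure lborel N'"
    by (simp add: lborel_prod vimage_def)
  also have "\<dots> = 0" using assms by auto
  finally show ?thesis
    using nn_integral_0_iff_AE[of "\<lambda>x. emeasure lborel {t. (x, t) \<in> N'}" lborel] meas_sec2[OF N'b] by simp
qed

lemma transfer:
  fixes E :: "(real \<times> real) set"
  assumes "E \<in> sets lebesgue"
  obtains S where "S \<in> sets borel" "AE z in lborel. (z \<in> E) = (z \<in> S)"
    "AE y in lborel. emeasure lebesgue {t. (t, y) \<in> E} = emeasure lborel {t. (t, y) \<in> S}"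
    "AE x in lborel. emeasure lebesgue {t. (x, t) \<in> E} = emeasure lborel {t. (x, t) \<in> S}"
proof -
  obtain S N N' where E: "E = S \<union> N" "N \<subseteq> N'" "N' \<in> null_sets lborel" "S \<in> sets lborel"
    using sets_completionE[OF assms] by metis
  have Sb: "S \<in> sets borel" using E by simp
  have N'b: "N' \<in> sets borel" using E by auto
  have a1: "AE z in lborel. (z \<in> E) = (z \<in> S)"
    by (rule AE_I'[OF E(3)]) (use E in auto)
  have a2: "AE y in lborel. emeasure lebesgue {t. (t, y) \<in> E} = emeasure lborel {t. (t, y) \<in> S}"
    using AE_sec1[OF E(3)]
  proof eventually_elim
    case (elim y)
    have "{t. (t, y) \<in> E} = {t. (t, y) \<in> S} \<union> {t. (t, y) \<in> N}" using E by auto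
    moreover have "emeasure lebesgue ({t. (t, y) \<in> S} \<union> {t. (t, y) \<in> N}) = emeasure lborel {t. (t, y) \<in> S}"
      by (rule compl_meas[OF slice1_meas[OF Sb] _ slice1_meas[OF N'b] elim]) (use E in auto)
    ultimately show ?case by simp
  qed
  have a3: "AE x in lborel. emeasure lebesgue {t. (x, t) \<in> E} = emeasure lborel {t. (x, t) \<in> S}"
    using AE_sec2[OF E(3)]
  proof eventually_elim
    case (elim x)
    have "{t. (x, t) \<in> E} = {t. (x, t) \<in> S} \<union> {t. (x, t) \<in> N}" using E by auto
    moreover have "emeasure lebesgue ({t. (x, t) \<in> S} \<union> {t. (x, t) \<in> N}) = emeasure lborel {t. (x, t) \<in> S}"
      by (rule compl_meas[OF slice2_meas[OF Sb] _ slice2_meas[OF N'b] elim]) (use E in auto)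
    ultimately show ?case by simp
  qed
  show ?thesis using that Sb a1 a2 a3 by blast
qed



lemma steiner_e1: "steiner E (1,0) = {z. ennreal (2*\<bar>fst z\<bar>) \<le> emeasure lebesgue {t. (t, snd z) \<in> E}}"
  by (simp add: steiner_def proj_def perp_def line_section_def inner_prod_def)
lemma steiner_me1: "steiner E (-1,0) = {z. ennreal (2*\<bar>fst z\<bar>) \<le> emeasure lebesgue {t. (-t, snd z) \<in> E}}"
  by (simp add: steiner_def proj_def perp_def line_section_def inner_prod_def)
lemma steiner_e2: "steiner E (0,1) = {z. ennreal (2*\<bar>snd z\<bar>) \<le> emeasure lebesgue {t. (fst z, t) \<in> E}}"
  by (simp add: steiner_def proj_def perp_def line_section_def inner_prod_def)
lemma steiner_me2: "steiner E (0,-1) = {z. ennreal (2*\<bar>snd z\<bar>) \<le> emeasure lebesgue {t. (fst z, -t) \<in> E}}"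
  by (simp add: steiner_def proj_def perp_def line_section_def inner_prod_def)

lemma refl_meas: "emeasure lebesgue {t::real. P (-t)} = emeasure lebesgue {t. P t}"
proof -
  have "{t::real. P (-t)} = (\<lambda>x. (-1) *\<^sub>R x + 0) ` {t. P t}"
  proof (rule set_eqI)
    fix x :: real
    show "x \<in> {t. P (-t)} \<longleftrightarrow> x \<in> (\<lambda>x. (-1) *\<^sub>R x + 0) ` {t. P t}"
      by (auto simp: image_iff)
  qed
  then show ?thesis using emeasure_lebesgue_affine[of "-1" 0 "{t. P t}"] by simp
qed

lemma diss_lborel: "dissipation E F = (\<integral>\<^sup>+z. ennreal (dist_inf_bd F z) * indicator ((E - F) \<union> (F - E)) z \<partial>lborel)"
  unfolding dissipation_def by (rule nn_integral_completion)

lemma diss_ae: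
  assumes "AE z in lborel. (z \<in> E) = (z \<in> S)"
  shows "dissipation E F = dissipation S F"
  unfolding diss_lborel
proof (rule nn_integral_cong_AE)
  show "AE z in lborel. ennreal (dist_inf_bd F z) * indicator ((E - F) \<union> (F - E)) z =
        ennreal (dist_inf_bd F z) * indicator ((S - F) \<union> (F - S)) z"
    using assms by eventually_elim (simp add: indicator_def)
qed

lemma null_strip1:
  assumes "M0 \<in> null_sets (lborel :: real measure)"
  shows "(UNIV :: real set) \<times> M0 \<in> null_sets (lborel :: (real \<times> real) measure)"
proof -
  have "UNIV \<times> M0 \<in> null_sets (lborel \<Otimes>\<^sub>M (lborel :: real measure))"
    using assms by (intro lborel.times_in_null_sets2) auto
  then show ?thesis by (simp only: lborel_prod)
qed

lemma null_strip2:
  assumes "M0 \<in> null_sets (lborel :: real measure)"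
  shows "M0 \<times> (UNIV :: real set) \<in> null_sets (lborel :: (real \<times> real) measure)"
proof -
  have "M0 \<times> UNIV \<in> null_sets ((lborel :: real measure) \<Otimes>\<^sub>M lborel)"
    using assms by (intro lborel.times_in_null_sets1) auto
  then show ?thesis by (simp only: lborel_prod)
qed

lemma ae_St1:
  assumes "AE y in lborel. emeasure lebesgue {t. (t, y) \<in> E} = emeasure lborel {t. (t, y) \<in> S}"
  shows "AE z in lborel. (z \<in> {z. ennreal (2*\<bar>fst z\<bar>) \<le> emeasure lebesgue {t. (t, snd z) \<in> E}}) = (z \<in> St1 S)"
proof -
  from assms obtain M0 where M0: "{y \<in> space lborel. \<not> emeasure lebesgue {t. (t, y) \<in> E} = emeasure lborel {t. (t, y) \<in> S}} \<subseteq> M0"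
    "emeasure lborel M0 = 0" "M0 \<in> sets lborel" by (rule AE_E)
  have "M0 \<in> null_sets lborel" using M0 by auto
  from null_strip1[OF this] show ?thesis
    by (rule AE_I') (use M0 in \<open>auto simp: St1_def\<close>)
qed

lemma ae_St2:
  assumes "AE x in lborel. emeasure lebesgue {t. (x, t) \<in> E} = emeasure lborel {t. (x, t) \<in> S}"
  shows "AE z in lborel. (z \<in> {z. ennreal (2*\<bar>snd z\<bar>) \<le> emeasure lebesgue {t. (fst z, t) \<in> E}}) = (z \<in> St2 S)"
proof -
  from assms obtain M0 where M0: "{x \<in> space lborel. \<not> emeasure lebesgue {t. (x, t) \<in> E} = emeasure lborel {t. (x, t) \<in> S}} \<subseteq> M0"
    "emeasure lborel M0 = 0" "M0 \<in> sets lborel" by (rule AE_E)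
  have "M0 \<in> null_sets lborel" using M0 by auto
  from null_strip2[OF this] show ?thesis
    by (rule AE_I') (use M0 in \<open>auto simp: St2_def\<close>)
qed

theorem proposition2p5:
  fixes E :: "(real \<times> real) set" and a b :: real and eta :: "real \<times> real"
  assumes "finite_perimeter E"
    and "emeasure lebesgue E = 1"
    and "a > 0" and "b > 0" and "a * b = 1"
    and "eta \<in> {(1, 0), (-1, 0), (0, 1), (0, -1)}"
  shows "dissipation E ({-a/2..a/2} \<times> {-b/2..b/2})
           \<ge> dissipation (steiner E eta) ({-a/2..a/2} \<times> {-b/2..b/2})"
proof -
  have Eleb: "E \<in> sets lebesgue" using assms(1) unfolding finite_perimeter_def by simp
  obtain S where S: "S \<in> sets borel" "AE z in lborel. (z \<in> E) = (z \<in> S)"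
    "AE y in lborel. emeasure lebesgue {t. (t, y) \<in> E} = emeasure lborel {t. (t, y) \<in> S}"
    "AE x in lborel. emeasure lebesgue {t. (x, t) \<in> E} = emeasure lborel {t. (x, t) \<in> S}"
    using transfer[OF Eleb] by blast
  define R where "R = {-a/2..a/2} \<times> {-b/2..b/2}"
  have Rr: "R = rect a b" unfolding R_def rect_def ..
  have dR: "dist_inf_bd R z = dd a b z" for z
    unfolding R_def dd_def by (rule dist_rect[OF assms(3,4)])
  have form: "dissipation X R = (\<integral>\<^sup>+z. ennreal (dd a b z) * indicator ((X - rect a b) \<union> (rect a b - X)) z \<partial>lborel)" for X
    unfolding diss_lborel dR unfolding Rr ..
  have lhs: "dissipation E R = (\<integral>\<^sup>+z. ennreal (dd a b z) * indicator ((S - rect a b) \<union> (rect a b - S)) z \<partial>lborel)"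
  proof -
    have "dissipation E R = dissipation S R" by (rule diss_ae[OF S(2)])
    also have "\<dots> = (\<integral>\<^sup>+z. ennreal (dd a b z) * indicator ((S - rect a b) \<union> (rect a b - S)) z \<partial>lborel)"
      by (rule form)
    finally show ?thesis .
  qed
  have st1: "steiner E (1,0) = steiner E (-1,0)"
    unfolding steiner_e1 steiner_me1 refl_meas[of "\<lambda>t. (t, _) \<in> E"] ..
  have st2: "steiner E (0,1) = steiner E (0,-1)"
    unfolding steiner_e2 steiner_me2 refl_meas[of "\<lambda>t. (_, t) \<in> E"] ..
  have case1: "dissipation (steiner E (1,0)) R \<le> dissipation E R"
  proof -
    have "dissipation (steiner E (1,0)) R = dissipation (St1 S) R"
      unfolding steiner_e1 by (rule diss_ae[OF ae_St1[OF S(3)]])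
    then show ?thesis unfolding lhs using borel1[OF S(1), of a b] form by simp
  qed
  have case2: "dissipation (steiner E (0,1)) R \<le> dissipation E R"
  proof -
    have "dissipation (steiner E (0,1)) R = dissipation (St2 S) R"
      unfolding steiner_e2 by (rule diss_ae[OF ae_St2[OF S(4)]])
    then show ?thesis unfolding lhs using borel2[OF S(1), of a b] form by simp
  qed
  show ?thesis
    using assms(6) case1 case2 st1 st2 unfolding R_def by auto
qed

end
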